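(* Let $G$ be an $(N,k)$ Adinkra obtained from an $N$-cube Adinkra by quotienting by a doubly even $(N,k)$ code $C$ (vertices labeled by cosets $x+C$). Let $\phi$ be a single orbit of the automorphism group of $G$ disregarding vertex coloring, and let $c\in\mathbb{Z}_2^N$. If $\langle x,c\rangle \pmod 2$ takes the same value for all $x\in\mathbb{Z}_2^N$ with $x+C\in\phi$, then $c\in C$.
   Context: An Adinkra of dimension $N$ is a finite connected simple graph $G=(V,E)$ with: a bipartition of $V$ into bosons and fermions (every edge joins a boson and a fermion); a height function $\mathrm{hgt}:V\to\mathbb{Z}$ with adjacent vertices at heights differing by $1$; a coloring of $E$ by colors $\{1,\dots,N\}$ such that each vertex is incident to exactly one edge of each color; an edge parity $\pi:E\to\mathbb{Z}_2$ (parity $1$ = dashed); such that every path with edge colors $(i,j)$, $i\ne j$, lies in a unique 4-cycle with colors $(i,j,i,j)$, each having an odd number of dashed edges. If $|V|=2^{N-k}$, $G$ is an $(N,k)$ Adinkra. Switching a vertex reverses the parity of its incident edges. A doubly even $(N,k)$ code $C$ is a $k$-dimensional subspace of $\mathbb{Z}_2^N$ all of whose elements have weight $\equiv0\pmod4$; $\langle u,v\rangle=\sum_i u_iv_i \bmod 2$. Quotient construction: label the vertices of an $N$-cube Adinkra by $\mathbb{Z}_2^N$ so that color-$i$ edges join $v$ and $v+e_i$, and identify vertices whose labels differ by elements of $C$; the result has vertices $x+C$ with color-$i$ edges joining $x+C$ and $x+e_i+C$. An automorphism disregarding vertex coloring is a permutation of $V$ preserving adjacency and edge colors (ignoring heights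 and bipartition) which becomes parity-preserving after switching some set of vertices. *)

theory Defs
  imports Main
begin

text \<open>Vectors of Z_2^N are represented as subsets of {..<N} (the support);
addition is symmetric difference, weight is cardinality.\<close>

definition vadd :: "nat set \<Rightarrow> nat set \<Rightarrow> nat set" where
  "vadd a b = (a - b) \<union> (b - a)"

definition vinner :: "nat set \<Rightarrow> nat set \<Rightarrow> bool" where
  "vinner a b = odd (card (a \<inter> b))"

definition doubly_even_code :: "nat \<Rightarrow> nat \<Rightarrow> nat set set \<Rightarrow> bool" where
  "doubly_even_code N k C \<longleftrightarrow>
     C \<subseteq> Pow {..<N} \<and> {} \<in> C \<and> (\<forall>a\<in>C. \<forall>b\<in>C. vadd a b \<in> C) \<and>
     card C = 2 ^ k \<and> (\<forall>a\<in>C. card a mod 4 = 0)"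

definition coset :: "nat set set \<Rightarrow> nat set \<Rightarrow> nat set set" where
  "coset C x = (\<lambda>c. vadd x c) ` C"

definition qverts :: "nat \<Rightarrow> nat set set \<Rightarrow> nat set set set" where
  "qverts N C = coset C ` Pow {..<N}"

definition nbr :: "nat set set \<Rightarrow> nat \<Rightarrow> nat set set" where
  "nbr u i = (\<lambda>y. vadd y {i}) ` u"

definition qedge :: "nat \<Rightarrow> nat set set \<Rightarrow> nat set set \<Rightarrow> nat set set \<Rightarrow> nat \<Rightarrow> bool" where
  "qedge N C u v i \<longleftrightarrow> u \<in> qverts N C \<and> i < N \<and> v = nbr u i"

text \<open>Edge parity is given as a function of (vertex, color), required to be
well defined on edges (same value at both endpoints).\<close>
definition quotient_adinkra ::
  "nat \<Rightarrow> nat set set \<Rightarrow> (nat set set \<Rightarrow> nat \<Rightarrow> bool) \<Rightarrow> (nat set set \<Rightarrow> int)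
   \<Rightarrow> (nat set set \<Rightarrow> bool) \<Rightarrow> bool" where
  "quotient_adinkra N C par hgt boson \<longleftrightarrow>
     (\<forall>u\<in>qverts N C. \<forall>i<N. par (nbr u i) i = par u i) \<and>
     (\<forall>u\<in>qverts N C. \<forall>i<N. boson (nbr u i) \<noteq> boson u) \<and>
     (\<forall>u\<in>qverts N C. \<forall>i<N. hgt (nbr u i) = hgt u + 1 \<or> hgt (nbr u i) = hgt u - 1) \<and>
     (\<forall>u\<in>qverts N C. \<forall>i<N. \<forall>j<N. i \<noteq> j \<longrightarrow>
        odd (of_bool (par u i) + of_bool (par (nbr u i) j) + of_bool (par (nbr u j) i)
             + of_bool (par u j) :: nat))"

text \<open>Automorphism disregarding vertex coloring: a permutation of the vertices
preserving colored adjacency which becomes parity preserving after switching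
some set S of vertices.\<close>
definition aut_dvc ::
  "nat \<Rightarrow> nat set set \<Rightarrow> (nat set set \<Rightarrow> nat \<Rightarrow> bool)
   \<Rightarrow> (nat set set \<Rightarrow> nat set set) \<Rightarrow> bool" where
  "aut_dvc N C par \<sigma> \<longleftrightarrow>
     bij_betw \<sigma> (qverts N C) (qverts N C) \<and>
     (\<forall>u\<in>qverts N C. \<forall>v\<in>qverts N C. \<forall>i.
        qedge N C u v i \<longleftrightarrow> qedge N C (\<sigma> u) (\<sigma> v) i) \<and>
     (\<exists>S \<subseteq> qverts N C. \<forall>u\<in>qverts N C. \<forall>i<N.
        par (\<sigma> u) i = (par u i \<noteq> ((u \<in> S) \<noteq> (nbr u i \<in> S))))"

definition aut_orbit ::
  "nat \<Rightarrow> nat set set \<Rightarrow> (nat set set \<Rightarrow> nat \<Rightarrow> bool) \<Rightarrow> nat set set \<Rightarrow> nat set set set" where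
  "aut_orbit N C par u = {\<sigma> u | \<sigma>. aut_dvc N C par \<sigma>}"

end

theory Submission
  imports Defs
begin



lemma vadd_comm: "vadd a b = vadd b a" by (auto simp: vadd_def)
lemma vadd_assoc: "vadd (vadd a b) c = vadd a (vadd b c)" by (auto simp: vadd_def)
lemma vadd_self[simp]: "vadd a a = {}" by (auto simp: vadd_def)
lemma vadd_empty[simp]: "vadd a {} = a" "vadd {} a = a" by (auto simp: vadd_def)
lemma vadd_sub: "a \<subseteq> I \<Longrightarrow> b \<subseteq> I \<Longrightarrow> vadd a b \<subseteq> I" by (auto simp: vadd_def)
lemma vadd_cancel: "vadd (vadd a b) b = a" by (auto simp: vadd_def)

lemma odd_card_vadd:
  assumes "finite A" "finite B"
  shows "odd (card (vadd A B)) = (odd (card A) \<noteq> odd (card B))"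
proof -
  have d: "card (vadd A B) = card (A - B) + card (B - A)"
    unfolding vadd_def using assms by (intro card_Un_disjoint) auto
  have 1: "card (A - B) = card A - card (A \<inter> B)" using assms by (simp add: card_Diff_subset_Int)
  have 2: "card (B - A) = card B - card (A \<inter> B)" using assms
    by (metis Int_commute card_Diff_subset_Int finite_Int)
  have 3: "card (A \<inter> B) \<le> card A" "card (A \<inter> B) \<le> card B" using assms
    by (auto intro: card_mono)
  show ?thesis unfolding d 1 2 using 3 by presburger
qed

lemma vadd_Int: "vadd a b \<inter> c = vadd (a \<inter> c) (b \<inter> c)" by (auto simp: vadd_def)

lemma vinner_add1:
  "finite p \<Longrightarrow> finite q \<Longrightarrow> vinner (vadd p q) r = (vinner p r \<noteq> vinner q r)"
  unfolding vinner_def vadd_Int by (simp add: odd_card_vadd)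

lemma vinner_sym: "vinner a b = vinner b a" by (simp add: vinner_def Int_commute)

lemma vinner_add2:
  "finite p \<Longrightarrow> finite q \<Longrightarrow> vinner r (vadd p q) = (vinner r p \<noteq> vinner r q)"
  using vinner_add1 vinner_sym by metis

lemma odd_card_vadd_single:
  "finite x \<Longrightarrow> odd (card (vadd x {i} \<inter> A)) = (odd (card (x \<inter> A)) \<noteq> (i \<in> A))"
  unfolding vadd_Int by (cases "i \<in> A") (auto simp: odd_card_vadd Int_commute)

function pot :: "(nat set \<Rightarrow> nat \<Rightarrow> bool) \<Rightarrow> nat set \<Rightarrow> bool" where
 "pot D x = (if x = {} \<or> infinite x then False else (pot D (x - {Max x}) \<noteq> D (x - {Max x}) (Max x)))"
 by auto
termination by (relation "measure (\<lambda>(D, x). card x)") (auto simp: card_gt_0_iff)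

declare pot.simps[simp del]

lemma pot_empty[simp]: "pot D {} = False" by (simp add: pot.simps)

lemma pot_insert:
  assumes "finite x" "\<forall>y\<in>x. y < M"
  shows "pot D (insert M x) = (pot D x \<noteq> D x M)"
proof -
  have M: "Max (insert M x) = M" using assms by (auto intro!: Max_eqI)
  have "M \<notin> x" using assms by auto
  hence "insert M x - {M} = x" by auto
  thus ?thesis using assms M by (subst pot.simps) auto
qed

lemma pot_step:
  assumes E: "\<forall>y\<subseteq>{..<N}. \<forall>i<N. D (vadd y {i}) i = D y i"
    and Q: "\<forall>y\<subseteq>{..<N}. \<forall>i<N. \<forall>j<N. i \<noteq> j \<longrightarrow>
              ((D y i \<noteq> D (vadd y {i}) j) = (D (vadd y {j}) i \<noteq> D y j))"
    and x: "x \<subseteq> {..<N}" and i: "i < N"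
  shows "pot D (vadd x {i}) = (pot D x \<noteq> D x i)"
proof -
  have "finite x" using x finite_subset by blast
  from this x show ?thesis
  proof (induct x rule: finite_linorder_max_induct)
    case empty
    have "vadd {} {i} = insert i {}" by simp
    then show ?case using pot_insert[of "{}" i D] by simp
  next
    case (insert b A)
    have bA: "b \<notin> A" using insert by auto
    have A: "A \<subseteq> {..<N}" "b < N" using insert by auto
    have IH: "pot D (vadd A {i}) = (pot D A \<noteq> D A i)" using insert A by auto
    have pb: "pot D (insert b A) = (pot D A \<noteq> D A b)" by (rule pot_insert) (use insert in auto)
    consider "i = b" | "b < i" | "i < b" by linarith
    then show ?case
    proof cases
      case 1
      have v: "vadd (insert b A) {i} = A" using 1 bA by (auto simp: vadd_def)
      have "insert b A = vadd A {b}" using bA by (auto simp: vadd_def)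
      hence "D (insert b A) b = D A b" using E A by simp
      then show ?thesis using v pb 1 by auto
    next
      case 2
      have v: "vadd (insert b A) {i} = insert i (insert b A)" using 2 insert by (auto simp: vadd_def)
      have "\<forall>y\<in>insert b A. y < i" using 2 insert by auto
      then show ?thesis unfolding v by (subst pot_insert) (use insert in auto)
    next
      case 3
      have v: "vadd (insert b A) {i} = insert b (vadd A {i})" using 3 insert by (auto simp: vadd_def)
      have "\<forall>y\<in>vadd A {i}. y < b" using 3 insert by (auto simp: vadd_def)
      moreover have "finite (vadd A {i})" using insert by (simp add: vadd_def)
      ultimately have p2: "pot D (vadd (insert b A) {i}) = (pot D (vadd A {i}) \<noteq> D (vadd A {i}) b)"
        unfolding v by (simp add: pot_insert)
      have ib: "insert b A = vadd A {b}" using bA by (auto simp: vadd_def)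
      have q: "(D A i \<noteq> D (vadd A {i}) b) = (D (vadd A {b}) i \<noteq> D A b)"
        using Q A i 3 by auto
      show ?thesis using p2 IH pb q ib by auto
    qed
  qed
qed

lemma const_cube:
  assumes "\<forall>y\<subseteq>{..<N}. \<forall>i<N. K (vadd y {i}) = K y" and "y \<subseteq> {..<N}"
  shows "K y = K {}"
proof -
  have "finite y" using assms finite_subset by blast
  from this assms(2) show ?thesis
  proof (induct y rule: finite_induct)
    case empty then show ?case by simp
  next
    case (insert x F)
    have "insert x F = vadd F {x}" using insert by (auto simp: vadd_def)
    moreover have "F \<subseteq> {..<N}" "x < N" using insert by auto
    ultimately show ?case using insert assms(1) by metis
  qed
qed

definition Bf :: "nat set \<Rightarrow> nat set \<Rightarrow> bool" where
  "Bf x w = odd (\<Sum>i\<in>x. card (w \<inter> {..<i}))"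

lemma Bf_empty[simp]: "Bf {} w = False" by (simp add: Bf_def)

lemma Bf_step: "finite x \<Longrightarrow> Bf (vadd x {i}) w = (Bf x w \<noteq> odd (card (w \<inter> {..<i})))"
proof (cases "i \<in> x")
  case True
  assume f: "finite x"
  have v: "vadd x {i} = x - {i}" using True by (auto simp: vadd_def)
  have "(\<Sum>j\<in>x. card (w \<inter> {..<j})) = card (w \<inter> {..<i}) + (\<Sum>j\<in>x - {i}. card (w \<inter> {..<j}))"
    by (rule sum.remove[OF f True])
  then show ?thesis unfolding Bf_def v by auto
next
  case False
  assume f: "finite x"
  have v: "vadd x {i} = insert i x" using False by (auto simp: vadd_def)
  show ?thesis unfolding Bf_def v using f False by auto
qed



lemma Bf_right_insert:
  assumes "finite w" "i \<notin> a0"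
  shows "Bf w (insert i a0) = (Bf w a0 \<noteq> odd (card (w \<inter> {i<..})))"
proof -
  have c: "card (insert i a0 \<inter> {..<j}) = card (a0 \<inter> {..<j}) + (if j \<in> {i<..} then 1 else 0)" for j
  proof (cases "i < j")
    case True
    have "insert i a0 \<inter> {..<j} = insert i (a0 \<inter> {..<j})" using True by auto
    moreover have "finite (a0 \<inter> {..<j})" by simp
    ultimately show ?thesis using True assms(2) by simp
  next
    case False
    have "insert i a0 \<inter> {..<j} = a0 \<inter> {..<j}" using False by auto
    then show ?thesis using False by simp
  qed
  have "(\<Sum>j\<in>w. card (insert i a0 \<inter> {..<j})) =
        (\<Sum>j\<in>w. card (a0 \<inter> {..<j})) + (\<Sum>j\<in>w. (if j \<in> {i<..} then 1 else 0))"
    unfolding c by (simp add: sum.distrib)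
  also have "(\<Sum>j\<in>w. (if j \<in> {i<..} then 1 else 0)) = (\<Sum>j\<in>w \<inter> {i<..}. (1::nat))"
    using sum.inter_restrict[OF assms(1), of "\<lambda>_. (1::nat)" "{i<..}"] by simp
  also have "\<dots> = card (w \<inter> {i<..})" by simp
  finally show ?thesis unfolding Bf_def by simp
qed

lemma card_split3:
  fixes w :: "nat set"
  assumes "finite w"
  shows "card w = card (w \<inter> {..<i}) + card (w \<inter> {i<..}) + (if i \<in> w then 1 else 0)"
proof -
  have e: "w = (w \<inter> {..<i}) \<union> (w \<inter> {i<..}) \<union> (w \<inter> {i})" by (auto simp: not_less le_less)
  have "card w = card ((w \<inter> {..<i}) \<union> (w \<inter> {i<..})) + card (w \<inter> {i})"
    by (subst e, rule card_Un_disjoint) (use assms in auto)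
  also have "card ((w \<inter> {..<i}) \<union> (w \<inter> {i<..})) = card (w \<inter> {..<i}) + card (w \<inter> {i<..})"
    by (rule card_Un_disjoint) (use assms in auto)
  also have "card (w \<inter> {i}) = (if i \<in> w then 1 else 0)" by auto
  finally show ?thesis .
qed

lemma Bf_swap:
  assumes "finite a" "finite w" "even (card w)"
  shows "(Bf a w \<noteq> Bf w a) = vinner a w"
  using assms(1)
proof (induct a rule: finite_induct)
  case empty
  have "Bf w {} = False" unfolding Bf_def by simp
  then show ?case by (simp add: vinner_def)
next
  case (insert i a0)
  have ia: "insert i a0 = vadd a0 {i}" using insert by (auto simp: vadd_def)
  have 1: "Bf (insert i a0) w = (Bf a0 w \<noteq> odd (card (w \<inter> {..<i})))"
    unfolding ia using Bf_step insert by blast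
  have 2: "Bf w (insert i a0) = (Bf w a0 \<noteq> odd (card (w \<inter> {i<..})))"
    using Bf_right_insert assms insert by blast
  have 3: "vinner (insert i a0) w = (vinner a0 w \<noteq> (i \<in> w))"
    unfolding ia using vinner_add1[of a0 "{i}" w] insert by (cases "i \<in> w") (auto simp: vinner_def)
  have 4: "(odd (card (w \<inter> {..<i})) \<noteq> odd (card (w \<inter> {i<..}))) = (i \<in> w)"
    using card_split3[OF assms(2), of i] assms(3) by (cases "i \<in> w") auto
  show ?case using 1 2 3 4 insert by auto
qed

lemma separation:
  assumes "finite I"
  shows "C \<subseteq> Pow I \<Longrightarrow> {} \<in> C \<Longrightarrow> (\<forall>a\<in>C. \<forall>b\<in>C. vadd a b \<in> C) \<Longrightarrow> c \<subseteq> I \<Longrightarrow> c \<notin> C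
    \<Longrightarrow> \<exists>a\<subseteq>I. (\<forall>w\<in>C. \<not> vinner a w) \<and> vinner a c"
  using assms
proof (induct I arbitrary: C c rule: finite_induct)
  case empty
  then show ?case by auto
next
  case (insert n J)
  have finJ: "finite J" by fact
  show ?case
  proof (cases "\<forall>w\<in>C. n \<notin> w")
    case True
    have CJ: "C \<subseteq> Pow J" using True insert.prems by auto
    show ?thesis
    proof (cases "n \<in> c")
      case False
      have "c \<subseteq> J" using False insert.prems by auto
      have "\<exists>a\<subseteq>J. (\<forall>w\<in>C. \<not> vinner a w) \<and> vinner a c"
        by (rule insert.hyps(3)[OF CJ]) (use insert.prems \<open>c \<subseteq> J\<close> in auto)
      then show ?thesis by blast
    next
      case nc: True
      have "\<forall>w\<in>C. \<not> vinner {n} w" using True by (auto simp: vinner_def)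
      moreover have "vinner {n} c" using nc by (auto simp: vinner_def)
      ultimately show ?thesis by blast
    qed
  next
    case False
    then obtain w0 where w0: "w0 \<in> C" "n \<in> w0" by blast
    define C' where "C' = {w\<in>C. n \<notin> w}"
    define c' where "c' = (if n \<in> c then vadd c w0 else c)"
    have C'J: "C' \<subseteq> Pow J" using insert.prems unfolding C'_def by auto
    have C'e: "{} \<in> C'" using insert.prems unfolding C'_def by auto
    have C'cl: "\<forall>a\<in>C'. \<forall>b\<in>C'. vadd a b \<in> C'" using insert.prems unfolding C'_def
      by (auto simp: vadd_def)
    have w0I: "w0 \<subseteq> insert n J" using w0 insert.prems by auto
    have c'J: "c' \<subseteq> J" using insert.prems w0I w0 unfolding c'_def vadd_def by auto
    have c'C: "c' \<notin> C'"
    proof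
      assume h: "c' \<in> C'"
      show False
      proof (cases "n \<in> c")
        case True
        hence "vadd c w0 \<in> C" using h unfolding c'_def C'_def by auto
        hence "vadd (vadd c w0) w0 \<in> C" using w0 insert.prems by blast
        then show False using insert.prems by (simp add: vadd_cancel)
      next
        case False
        then show False using h insert.prems unfolding c'_def C'_def by auto
      qed
    qed
    obtain a' where a': "a' \<subseteq> J" "\<forall>w\<in>C'. \<not> vinner a' w" "vinner a' c'"
      using insert.hyps(3)[OF C'J C'e C'cl c'J c'C] by blast
    define e where "e = (if vinner a' w0 then {n} else {})"
    define a where "a = vadd a' e"
    have fa': "finite a'" using a' finJ finite_subset by blast
    have fe: "finite e" unfolding e_def by simp
    have fa: "finite a" unfolding a_def vadd_def using fa' fe by simp
    have ay: "vinner a y = (vinner a' y \<noteq> (vinner a' w0 \<and> n \<in> y))" for y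
      unfolding a_def using vinner_add1[OF fa' fe, of y] unfolding e_def
      by (cases "n \<in> y") (auto simp: vinner_def)
    have fin: "\<And>y. y \<in> C \<Longrightarrow> finite y" using insert.prems finJ
      by (meson Pow_iff finite.insertI finite_subset subsetD)
    have aw0: "\<not> vinner a w0" using ay w0 by auto
    have perp: "\<forall>w\<in>C. \<not> vinner a w"
    proof
      fix w assume w: "w \<in> C"
      show "\<not> vinner a w"
      proof (cases "n \<in> w")
        case False
        then show ?thesis using ay a' w unfolding C'_def by auto
      next
        case True
        have "vadd w w0 \<in> C'" using w w0 True insert.prems unfolding C'_def by (auto simp: vadd_def)
        hence "\<not> vinner a (vadd w w0)" using ay a' by (auto simp: C'_def)
        moreover have "vinner a (vadd w w0) = (vinner a w \<noteq> vinner a w0)"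
          using vinner_add2 fin w w0 by blast
        ultimately show ?thesis using aw0 by auto
      qed
    qed
    have fc: "finite c" using insert.prems finJ finite_subset by blast
    have ac: "vinner a c"
    proof (cases "n \<in> c")
      case False
      then show ?thesis using ay a' unfolding c'_def by auto
    next
      case True
      have "c = vadd c' w0" using True unfolding c'_def by (simp add: vadd_cancel)
      moreover have "finite c'" using c'J finJ finite_subset by blast
      ultimately have "vinner a c = (vinner a c' \<noteq> vinner a w0)"
        using vinner_add2 fin w0 by metis
      moreover have "n \<notin> c'" using c'J insert.hyps by auto
      ultimately show ?thesis using ay a' aw0 by auto
    qed
    have "a \<subseteq> insert n J" using a' unfolding a_def e_def vadd_def by auto
    then show ?thesis using perp ac by blast
  qed
qed



definition tr :: "nat set \<Rightarrow> nat set set \<Rightarrow> nat set set" where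
  "tr a u = (\<lambda>y. vadd y a) ` u"

lemma tr_tr[simp]: "tr a (tr a u) = u"
  unfolding tr_def image_image by (simp add: vadd_cancel)

lemma tr_coset: "tr a (coset C x) = coset C (vadd x a)"
  unfolding tr_def coset_def image_image by (intro image_cong refl) (auto simp: vadd_def)

lemma nbr_coset: "nbr (coset C x) i = coset C (vadd x {i})"
  unfolding nbr_def coset_def image_image by (intro image_cong refl) (auto simp: vadd_def)

lemma tr_nbr: "tr a (nbr u i) = nbr (tr a u) i"
  unfolding nbr_def tr_def image_image by (intro image_cong refl) (auto simp: vadd_def)

lemma coset_shift:
  assumes cl: "\<forall>a\<in>C. \<forall>b\<in>C. vadd a b \<in> C" and w: "w \<in> C"
  shows "coset C (vadd x w) = coset C x"
proof
  show "coset C (vadd x w) \<subseteq> coset C x"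
  proof
    fix y assume "y \<in> coset C (vadd x w)"
    then obtain c where c: "c \<in> C" "y = vadd (vadd x w) c" unfolding coset_def by auto
    hence "y = vadd x (vadd w c)" by (simp add: vadd_assoc)
    moreover have "vadd w c \<in> C" using cl w c by blast
    ultimately show "y \<in> coset C x" unfolding coset_def by blast
  qed
next
  show "coset C x \<subseteq> coset C (vadd x w)"
  proof
    fix y assume "y \<in> coset C x"
    then obtain c where c: "c \<in> C" "y = vadd x c" unfolding coset_def by auto
    hence "y = vadd (vadd x w) (vadd w c)" by (auto simp: vadd_def)
    moreover have "vadd w c \<in> C" using cl w c by blast
    ultimately show "y \<in> coset C (vadd x w)" unfolding coset_def by blast
  qed
qed

lemma coset_eq:
  assumes "{} \<in> C" "coset C x = coset C y"
  shows "\<exists>w\<in>C. y = vadd x w"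
proof -
  have "y \<in> coset C y" unfolding coset_def using assms(1) by (metis image_eqI vadd_empty(1))
  then have "y \<in> coset C x" using assms(2) by simp
  then show ?thesis unfolding coset_def by auto
qed

lemma odd4: "odd (of_bool p + of_bool q + of_bool r + of_bool s :: nat) = ((p \<noteq> q) \<noteq> (r \<noteq> s))"
  by (cases p; cases q; cases r; cases s) auto

lemma Bf_lin:
  assumes "finite a" "x \<subseteq> {..<N}"
  shows "(Bf (vadd x a) w \<noteq> Bf x w) = Bf a w"
proof -
  define K where "K x = (Bf (vadd x a) w \<noteq> Bf x w)" for x
  have "\<forall>y\<subseteq>{..<N}. \<forall>i<N. K (vadd y {i}) = K y"
  proof (intro allI impI)
    fix y i assume y: "y \<subseteq> {..<N}" and "i < N"
    have fy: "finite y" using y finite_subset by blast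
    have fya: "finite (vadd y a)" using fy assms(1) by (simp add: vadd_def)
    have "vadd (vadd y {i}) a = vadd (vadd y a) {i}" by (auto simp: vadd_def)
    then show "K (vadd y {i}) = K y" unfolding K_def using Bf_step[OF fy] Bf_step[OF fya] by auto
  qed
  hence "K x = K {}" using const_cube assms(2) by blast
  then show ?thesis unfolding K_def by simp
qed

lemma tr_aut:
  assumes dec: "doubly_even_code N k C"
    and qa: "quotient_adinkra N C par hgt boson"
    and aN: "a \<subseteq> {..<N}" and aperp: "\<forall>w\<in>C. \<not> vinner a w"
  shows "aut_dvc N C par (tr a)"
proof -
  have Csub: "C \<subseteq> Pow {..<N}" and Ce: "{} \<in> C" and Ccl: "\<forall>a\<in>C. \<forall>b\<in>C. vadd a b \<in> C"
    and Cev: "\<forall>a\<in>C. card a mod 4 = 0" using dec unfolding doubly_even_code_def by auto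
  have QE: "\<forall>u\<in>qverts N C. \<forall>i<N. par (nbr u i) i = par u i"
    and QQ: "\<forall>u\<in>qverts N C. \<forall>i<N. \<forall>j<N. i \<noteq> j \<longrightarrow>
        odd (of_bool (par u i) + of_bool (par (nbr u i) j) + of_bool (par (nbr u j) i)
             + of_bool (par u j) :: nat)"
    using qa unfolding quotient_adinkra_def by auto
  have inQ: "x \<subseteq> {..<N} \<Longrightarrow> coset C x \<in> qverts N C" for x unfolding qverts_def by auto
  have fa: "finite a" using aN finite_subset by blast
  define P where "P x i = par (coset C x) i" for x i
  define P0 where "P0 x i = odd (card (x \<inter> {..<i}))" for x :: "nat set" and i :: nat
  define D0 where "D0 x i = (P x i \<noteq> P0 x i)" for x i
  have P0v: "finite x \<Longrightarrow> P0 (vadd x b) i = (P0 x i \<noteq> odd (card (b \<inter> {..<i})))"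
    if "finite b" for x b i
    unfolding P0_def vadd_Int using that by (simp add: odd_card_vadd)
  have P0s: "finite x \<Longrightarrow> P0 (vadd x {j}) i = (P0 x i \<noteq> (j < i))" for x j i
    unfolding P0_def using odd_card_vadd_single by simp
  have E0: "\<forall>y\<subseteq>{..<N}. \<forall>i<N. D0 (vadd y {i}) i = D0 y i"
  proof (intro allI impI)
    fix y i assume y: "y \<subseteq> {..<N}" and i: "i < N"
    have fy: "finite y" using y finite_subset by blast
    have "P (vadd y {i}) i = P y i" using QE[rule_format, OF inQ[OF y] i] unfolding P_def nbr_coset .
    then show "D0 (vadd y {i}) i = D0 y i" unfolding D0_def using P0s[OF fy] by simp
  qed
  have Q0: "\<forall>y\<subseteq>{..<N}. \<forall>i<N. \<forall>j<N. i \<noteq> j \<longrightarrow>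
              ((D0 y i \<noteq> D0 (vadd y {i}) j) = (D0 (vadd y {j}) i \<noteq> D0 y j))"
  proof (intro allI impI)
    fix y i j assume y: "y \<subseteq> {..<N}" and i: "i < N" and j: "j < N" and ij: "i \<noteq> j"
    have fy: "finite y" using y finite_subset by blast
    have "odd (of_bool (P y i) + of_bool (P (vadd y {i}) j) + of_bool (P (vadd y {j}) i)
             + of_bool (P y j) :: nat)"
      using QQ[rule_format, OF inQ[OF y] i j ij] unfolding P_def nbr_coset .
    hence q: "((P y i \<noteq> P (vadd y {i}) j) \<noteq> (P (vadd y {j}) i \<noteq> P y j))"
      using odd4[of "P y i" "P (vadd y {i}) j" "P (vadd y {j}) i" "P y j"] by (rule rev_iffD1)
    have "(i < j) = (\<not> j < i)" using ij by auto
    then show "(D0 y i \<noteq> D0 (vadd y {i}) j) = (D0 (vadd y {j}) i \<noteq> D0 y j)"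
      unfolding D0_def using q P0s[OF fy] by auto
  qed
  define g where "g = pot D0"
  have gstep: "x \<subseteq> {..<N} \<Longrightarrow> i < N \<Longrightarrow> g (vadd x {i}) = (g x \<noteq> D0 x i)" for x i
    unfolding g_def by (rule pot_step[OF E0 Q0])
  define F where "F x = ((g (vadd x a) \<noteq> g x) \<noteq> Bf x a)" for x
  have Fstep: "F (vadd x {i}) = (F x \<noteq> (P (vadd x a) i \<noteq> P x i))"
    if x: "x \<subseteq> {..<N}" and i: "i < N" for x i
  proof -
    have fx: "finite x" using x finite_subset by blast
    have xa: "vadd x a \<subseteq> {..<N}" using x aN by (rule vadd_sub)
    have e: "vadd (vadd x {i}) a = vadd (vadd x a) {i}" by (auto simp: vadd_def)
    have 1: "g (vadd (vadd x a) {i}) = (g (vadd x a) \<noteq> D0 (vadd x a) i)" by (rule gstep[OF xa i])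
    have 2: "g (vadd x {i}) = (g x \<noteq> D0 x i)" by (rule gstep[OF x i])
    have 3: "Bf (vadd x {i}) a = (Bf x a \<noteq> odd (card (a \<inter> {..<i})))" by (rule Bf_step[OF fx])
    have 4: "P0 (vadd x a) i = (P0 x i \<noteq> odd (card (a \<inter> {..<i})))" by (simp add: P0v fx fa)
    show ?thesis unfolding F_def e using 1 2 3 4 unfolding D0_def by auto
  qed
  have gper: "(g (vadd y w) \<noteq> g y) = ((g w \<noteq> g {}) \<noteq> Bf y w)"
    if w: "w \<in> C" and y: "y \<subseteq> {..<N}" for y w
  proof -
    have wN: "w \<subseteq> {..<N}" using w Csub by auto
    have fw: "finite w" using wN finite_subset by blast
    define K where "K y = ((g (vadd y w) \<noteq> g y) \<noteq> Bf y w)" for y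
    have "\<forall>y\<subseteq>{..<N}. \<forall>i<N. K (vadd y {i}) = K y"
    proof (intro allI impI)
      fix y i assume y: "y \<subseteq> {..<N}" and i: "i < N"
      have fy: "finite y" using y finite_subset by blast
      have yw: "vadd y w \<subseteq> {..<N}" using y wN by (rule vadd_sub)
      have e: "vadd (vadd y {i}) w = vadd (vadd y w) {i}" by (auto simp: vadd_def)
      have 1: "g (vadd (vadd y w) {i}) = (g (vadd y w) \<noteq> D0 (vadd y w) i)" by (rule gstep[OF yw i])
      have 2: "g (vadd y {i}) = (g y \<noteq> D0 y i)" by (rule gstep[OF y i])
      have 3: "Bf (vadd y {i}) w = (Bf y w \<noteq> odd (card (w \<inter> {..<i})))" by (rule Bf_step[OF fy])
      have 4: "P0 (vadd y w) i = (P0 y i \<noteq> odd (card (w \<inter> {..<i})))" by (simp add: P0v fy fw)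
      have 5: "P (vadd y w) i = P y i" unfolding P_def using coset_shift[OF Ccl w] by simp
      show "K (vadd y {i}) = K y" unfolding K_def e using 1 2 3 4 5 unfolding D0_def by auto
    qed
    hence "K y = K {}" using const_cube y by blast
    then show ?thesis unfolding K_def by auto
  qed
  have Fper: "F (vadd x w) = F x" if w: "w \<in> C" and x: "x \<subseteq> {..<N}" for x w
  proof -
    have wN: "w \<subseteq> {..<N}" using w Csub by auto
    have fw: "finite w" using wN finite_subset by blast
    have xa: "vadd x a \<subseteq> {..<N}" using x aN by (rule vadd_sub)
    have e: "vadd (vadd x w) a = vadd (vadd x a) w" by (auto simp: vadd_def)
    have 1: "(g (vadd (vadd x a) w) \<noteq> g (vadd x a)) = ((g w \<noteq> g {}) \<noteq> Bf (vadd x a) w)"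
      by (rule gper[OF w xa])
    have 2: "(g (vadd x w) \<noteq> g x) = ((g w \<noteq> g {}) \<noteq> Bf x w)" by (rule gper[OF w x])
    have 3: "(Bf (vadd x w) a \<noteq> Bf x a) = Bf w a" by (rule Bf_lin[OF fw x])
    have 4: "(Bf (vadd x a) w \<noteq> Bf x w) = Bf a w" by (rule Bf_lin[OF fa x])
    have m4: "card w mod 4 = 0" using Cev w by blast
    have ev: "even (card w)" using m4 by presburger
    have 5: "(Bf a w \<noteq> Bf w a) = False" using Bf_swap[OF fa fw ev] aperp w by simp
    show ?thesis unfolding F_def e using 1 2 3 4 5 by auto
  qed
  define S where "S = {u \<in> qverts N C. \<exists>x. x \<subseteq> {..<N} \<and> u = coset C x \<and> F x}"
  have memS: "(coset C x \<in> S) = F x" if x: "x \<subseteq> {..<N}" for x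
  proof
    assume "coset C x \<in> S"
    then obtain y where y: "y \<subseteq> {..<N}" "coset C x = coset C y" "F y" unfolding S_def by auto
    then obtain w where "w \<in> C" "x = vadd y w" using coset_eq[OF Ce, of y x] by auto
    then show "F x" using Fper y by simp
  next
    assume "F x" then show "coset C x \<in> S" unfolding S_def using inQ x by auto
  qed
  have Qchar: "u \<in> qverts N C \<longleftrightarrow> (\<exists>x. x \<subseteq> {..<N} \<and> u = coset C x)" for u
    unfolding qverts_def by auto
  have trQ: "u \<in> qverts N C \<Longrightarrow> tr a u \<in> qverts N C" for u
  proof -
    assume "u \<in> qverts N C"
    then obtain x where x: "x \<subseteq> {..<N}" "u = coset C x" using Qchar by blast
    have "vadd x a \<subseteq> {..<N}" using x(1) aN by (rule vadd_sub)
    then show ?thesis using x(2) Qchar by (simp add: tr_coset) blast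
  qed
  have bij: "bij_betw (tr a) (qverts N C) (qverts N C)"
    by (rule bij_betw_byWitness[where f'="tr a"]) (use trQ in auto)
  have edges: "\<forall>u\<in>qverts N C. \<forall>v\<in>qverts N C. \<forall>i.
        qedge N C u v i \<longleftrightarrow> qedge N C (tr a u) (tr a v) i"
  proof (intro ballI allI)
    fix u v i assume u: "u \<in> qverts N C" and v: "v \<in> qverts N C"
    have "(v = nbr u i) \<longleftrightarrow> (tr a v = tr a (nbr u i))" by (metis tr_tr)
    then show "qedge N C u v i \<longleftrightarrow> qedge N C (tr a u) (tr a v) i"
      unfolding qedge_def using u trQ[OF u] by (simp add: tr_nbr)
  qed
  have sw: "\<forall>u\<in>qverts N C. \<forall>i<N.
        par (tr a u) i = (par u i \<noteq> ((u \<in> S) \<noteq> (nbr u i \<in> S)))"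
  proof (intro ballI allI impI)
    fix u i assume u: "u \<in> qverts N C" and i: "i < N"
    then obtain x where x: "x \<subseteq> {..<N}" "u = coset C x" using Qchar by blast
    have xi: "vadd x {i} \<subseteq> {..<N}" using x i by (intro vadd_sub) auto
    have "nbr u i \<in> S \<longleftrightarrow> F (vadd x {i})" using memS[OF xi] x(2) by (simp add: nbr_coset)
    moreover have "u \<in> S \<longleftrightarrow> F x" using memS x by blast
    moreover have "par (tr a u) i = P (vadd x a) i" unfolding P_def using x(2) by (simp add: tr_coset)
    moreover have "par u i = P x i" unfolding P_def using x by simp
    ultimately show "par (tr a u) i = (par u i \<noteq> ((u \<in> S) \<noteq> (nbr u i \<in> S)))"
      using Fstep[OF x(1) i] by auto
  qed
  have "S \<subseteq> qverts N C" unfolding S_def by auto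
  hence ex: "\<exists>S \<subseteq> qverts N C. \<forall>u\<in>qverts N C. \<forall>i<N.
        par (tr a u) i = (par u i \<noteq> ((u \<in> S) \<noteq> (nbr u i \<in> S)))" using sw by blast
  show ?thesis unfolding aut_dvc_def using bij edges ex by (intro conjI)
qed

theorem mainTheorem6:
  fixes N k :: nat and C :: "nat set set"
    and par :: "nat set set \<Rightarrow> nat \<Rightarrow> bool" and hgt :: "nat set set \<Rightarrow> int"
    and boson :: "nat set set \<Rightarrow> bool"
    and \<phi> :: "nat set set set" and c :: "nat set"
  assumes "doubly_even_code N k C"
    and "quotient_adinkra N C par hgt boson"
    and "\<exists>u0 \<in> qverts N C. \<phi> = aut_orbit N C par u0"
    and "c \<subseteq> {..<N}"
    and "\<exists>b. \<forall>x. x \<subseteq> {..<N} \<and> coset C x \<in> \<phi> \<longrightarrow> vinner x c = b"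
  shows "c \<in> C"
proof (rule ccontr)
  assume cC: "c \<notin> C"
  have Csub: "C \<subseteq> Pow {..<N}" and Ce: "{} \<in> C" and Ccl: "\<forall>a\<in>C. \<forall>b\<in>C. vadd a b \<in> C"
    using assms(1) unfolding doubly_even_code_def by auto
  obtain u0 where u0: "u0 \<in> qverts N C" "\<phi> = aut_orbit N C par u0" using assms(3) by blast
  obtain x0 where x0: "x0 \<subseteq> {..<N}" "u0 = coset C x0" using u0 unfolding qverts_def by auto
  obtain b where b: "\<forall>x. x \<subseteq> {..<N} \<and> coset C x \<in> \<phi> \<longrightarrow> vinner x c = b" using assms(5) by blast
  have key: "vinner (vadd x0 a) c = b" if aN: "a \<subseteq> {..<N}" and ap: "\<forall>w\<in>C. \<not> vinner a w" for a
  proof -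
    have "aut_dvc N C par (tr a)" using tr_aut[OF assms(1) assms(2) aN ap] .
    hence "tr a u0 \<in> \<phi>" unfolding u0(2) aut_orbit_def by blast
    hence 1: "coset C (vadd x0 a) \<in> \<phi>" using x0(2) by (simp add: tr_coset)
    have 2: "vadd x0 a \<subseteq> {..<N}" using x0(1) aN by (rule vadd_sub)
    show ?thesis using b[rule_format, OF conjI[OF 2 1]] .
  qed
  have b0: "vinner x0 c = b" using key[of "{}"] by (simp add: vinner_def)
  obtain a where a: "a \<subseteq> {..<N}" "\<forall>w\<in>C. \<not> vinner a w" "vinner a c"
    using separation[OF finite_lessThan Csub Ce Ccl assms(4) cC] by blast
  have fx0: "finite x0" using x0 finite_subset by blast
  have fa: "finite a" using a finite_subset by blast
  have "vinner (vadd x0 a) c = (vinner x0 c \<noteq> vinner a c)" using vinner_add1[OF fx0 fa] .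
  then show False using key[OF a(1) a(2)] b0 a(3) by simp
qed

end
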